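(* Let $\alpha=[a_0;a_1,a_2,\dots]$ be irrational with convergents $p_k/q_k$, and let $N=\sum_{k=0}^{K-1} b_k q_k$ be the Ostrowski expansion of a non-negative integer. For any $k \ge 0$ such that $b_k \ge 1$, \[ -1 < -q_k \| q_k \alpha \| + q_k \| q_{k+1} \alpha \| \le \varepsilon_k (N) \le q_k \| q_{k+1} \alpha \| < \frac{1}{2} . \] If $b_{k+1} \le (1-\delta ) a_{k+2}$ with some $\delta >0$, then $\varepsilon_k (N) \ge -(1-\delta /3) q_k \| q_k \alpha \|$. If moreover $\frac{\log a_j}{a_{j+1}}\le T$ for all $j\ge k_0$ with constants $k_0,T\ge1$, then $\varepsilon_k (N) \ge -\left(1-\frac{1}{e^T+2}\right)$ for any $k \ge k_0$ such that $b_k \ge 1$.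
   Context: $p_k/q_k=[a_0;a_1,\dots,a_k]$, with $q_0=1,q_1=a_1$, $q_{k+1}=a_{k+1}q_k+q_{k-1}$. $\|y\|$ denotes distance to the nearest integer. The Ostrowski expansion of $N\ge0$ is the unique representation $N=\sum_{k=0}^{K-1}b_kq_k$ with integers $0\le b_0<a_1$, $0\le b_k\le a_{k+1}$, and $b_{k-1}=0$ whenever $b_k=a_{k+1}$ (coefficients $b_k$ with $k\ge K$ are $0$). For such $N$, $\varepsilon_k(N):=q_k\sum_{\ell=k+1}^{K-1}(-1)^{k+\ell}b_\ell\|q_\ell\alpha\|$. *)

theory Defs
  imports Complex_Main
begin

text \<open>Complete quotients of the (regular) continued fraction of alpha:
  r_0 = alpha, r_(n+1) = 1 / frac r_n.  For irrational alpha, frac r_n is never 0.\<close>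
primrec cf_rem :: "real \<Rightarrow> nat \<Rightarrow> real" where
  "cf_rem \<alpha> 0 = \<alpha>"
| "cf_rem \<alpha> (Suc n) = 1 / frac (cf_rem \<alpha> n)"

definition cf_a :: "real \<Rightarrow> nat \<Rightarrow> int" where
  "cf_a \<alpha> n = \<lfloor>cf_rem \<alpha> n\<rfloor>"

fun cf_q :: "real \<Rightarrow> nat \<Rightarrow> int" where
  "cf_q \<alpha> 0 = 1"
| "cf_q \<alpha> (Suc 0) = cf_a \<alpha> 1"
| "cf_q \<alpha> (Suc (Suc n)) = cf_a \<alpha> (n + 2) * cf_q \<alpha> (Suc n) + cf_q \<alpha> n"

definition dist_nint :: "real \<Rightarrow> real" where
  "dist_nint y = \<bar>y - of_int (round y)\<bar>"

definition ostrowski :: "real \<Rightarrow> nat \<Rightarrow> (nat \<Rightarrow> nat) \<Rightarrow> nat \<Rightarrow> bool" where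
  "ostrowski \<alpha> N b K \<longleftrightarrow>
     (\<forall>k\<ge>K. b k = 0) \<and>
     int (b 0) < cf_a \<alpha> 1 \<and>
     (\<forall>k. int (b k) \<le> cf_a \<alpha> (k + 1)) \<and>
     (\<forall>k. int (b (Suc k)) = cf_a \<alpha> (k + 2) \<longrightarrow> b k = 0) \<and>
     int N = (\<Sum>k<K. int (b k) * cf_q \<alpha> k)"

definition ost_eps :: "real \<Rightarrow> (nat \<Rightarrow> nat) \<Rightarrow> nat \<Rightarrow> nat \<Rightarrow> real" where
  "ost_eps \<alpha> b K k = real_of_int (cf_q \<alpha> k) *
     (\<Sum>l\<in>{k+1..<K}. (-1) ^ (k + l) * real (b l) * dist_nint (real_of_int (cf_q \<alpha> l) * \<alpha>))"

end

theory Submission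
  imports Defs
begin

declare cf_rem.simps(2)[simp del]

fun cfD :: "real \<Rightarrow> nat \<Rightarrow> real" where
  "cfD \<alpha> 0 = frac (cf_rem \<alpha> 0)"
| "cfD \<alpha> (Suc n) = cfD \<alpha> n * frac (cf_rem \<alpha> (Suc n))"

declare cfD.simps[simp del]

lemma rem_irr: fixes \<alpha> :: real assumes "\<alpha> \<notin> \<rat>" shows "cf_rem \<alpha> n \<notin> \<rat>"
proof (induction n)
  case 0 then show ?case using assms by simp
next
  case (Suc n)
  have "frac (cf_rem \<alpha> n) \<notin> \<rat>"
  proof
    assume "frac (cf_rem \<alpha> n) \<in> \<rat>"
    then have "frac (cf_rem \<alpha> n) + of_int \<lfloor>cf_rem \<alpha> n\<rfloor> \<in> \<rat>" by simp
    then show False using Suc by (simp add: frac_def)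
  qed
  then show ?case by (simp add: divide_inverse cf_rem.simps(2))
qed

lemma frac_pos: assumes "\<alpha> \<notin> \<rat>" shows "frac (cf_rem \<alpha> n) > 0"
proof -
  have "cf_rem \<alpha> n \<notin> \<int>" using rem_irr[OF assms, of n] Ints_subset_Rats by blast
  then show ?thesis by (metis frac_eq_0_iff frac_ge_0 less_le)
qed

lemma rem_mult: assumes "\<alpha> \<notin> \<rat>" shows "cf_rem \<alpha> (Suc n) * frac (cf_rem \<alpha> n) = 1"
  using frac_pos[OF assms, of n] by (simp add: cf_rem.simps(2))

lemma frac_Suc: "frac (cf_rem \<alpha> n) = cf_rem \<alpha> n - cf_a \<alpha> n"
  by (simp add: frac_def cf_a_def)

lemma a_ge1: assumes "\<alpha> \<notin> \<rat>" shows "cf_a \<alpha> (Suc n) \<ge> 1"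
proof -
  have "cf_rem \<alpha> (Suc n) > 1" using frac_pos[OF assms, of n] frac_lt_1[of "cf_rem \<alpha> n"]
    by (simp add: divide_simps cf_rem.simps(2))
  then show ?thesis unfolding cf_a_def by linarith
qed

lemma D_pos: assumes "\<alpha> \<notin> \<rat>" shows "cfD \<alpha> n > 0"
proof (induction n)
  case 0 show ?case using frac_pos[OF assms, of 0] by (simp only: cfD.simps)
next
  case (Suc n) then show ?case using frac_pos[OF assms, of "Suc n"] by (metis cfD.simps(2) mult_pos_pos)
qed

lemma D_rec: assumes "\<alpha> \<notin> \<rat>"
  shows "cfD \<alpha> n = cf_a \<alpha> (n+2) * cfD \<alpha> (n+1) + cfD \<alpha> (n+2)"
proof -
  have r: "cf_rem \<alpha> (Suc (Suc n)) * frac (cf_rem \<alpha> (Suc n)) = 1" by (rule rem_mult[OF assms])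
  have "cfD \<alpha> (n+2) = cfD \<alpha> n * frac (cf_rem \<alpha> (Suc n)) * (cf_rem \<alpha> (Suc (Suc n)) - cf_a \<alpha> (n+2))"
    using frac_Suc[of \<alpha> "n+2"] by (simp add: numeral_2_eq_2 cfD.simps)
  also have "\<dots> = cfD \<alpha> n - cf_a \<alpha> (n+2) * cfD \<alpha> (n+1)"
    using r by (simp add: algebra_simps cfD.simps)
  finally show ?thesis by simp
qed

lemma D_dec: assumes "\<alpha> \<notin> \<rat>" shows "cfD \<alpha> (Suc n) < cfD \<alpha> n"
  using D_pos[OF assms, of n] frac_lt_1[of "cf_rem \<alpha> (Suc n)"] by (simp add: cfD.simps)

lemma q_pos: assumes "\<alpha> \<notin> \<rat>" shows "cf_q \<alpha> n \<ge> 1 \<and> cf_q \<alpha> n \<le> cf_q \<alpha> (Suc n)"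
proof (induction n rule: nat_less_induct)
  case (1 n)
  show ?case
  proof (cases n)
    case 0 then show ?thesis using a_ge1[OF assms, of 0] by simp
  next
    case (Suc m)
    then have "cf_q \<alpha> m \<ge> 1" "cf_q \<alpha> (Suc m) \<ge> 1" using 1 by auto
    moreover have "cf_a \<alpha> (m+2) \<ge> 1" using a_ge1[OF assms, of "Suc m"] by simp
    ultimately show ?thesis using Suc by (simp add: mult_le_cancel_right1 add_increasing2)
  qed
qed

lemma q_ident: assumes "\<alpha> \<notin> \<rat>"
  shows "cf_q \<alpha> (Suc n) * cfD \<alpha> n + cf_q \<alpha> n * cfD \<alpha> (Suc n) = 1"
proof (induction n)
  case 0
  have "cfD \<alpha> 1 = cfD \<alpha> 0 * (cf_rem \<alpha> 1 - cf_a \<alpha> 1)" using frac_Suc[of \<alpha> 1] by (simp add: cfD.simps)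
  moreover have "cf_rem \<alpha> 1 * cfD \<alpha> 0 = 1" using rem_mult[OF assms, of 0] by (simp add: cfD.simps)
  ultimately show ?case by (simp add: algebra_simps)
next
  case (Suc n)
  have "cfD \<alpha> n = cf_a \<alpha> (n+2) * cfD \<alpha> (n+1) + cfD \<alpha> (n+2)" by (rule D_rec[OF assms])
  with Suc show ?case by (simp add: algebra_simps)
qed

lemma int_part: fixes \<alpha> :: real assumes "\<alpha> \<notin> \<rat>"
  shows "real_of_int (cf_q \<alpha> n) * \<alpha> - (-1)^n * cfD \<alpha> n \<in> \<int> \<and> real_of_int (cf_q \<alpha> (Suc n)) * \<alpha> - (-1)^(Suc n) * cfD \<alpha> (Suc n) \<in> \<int>"
proof (induction n)
  case 0
  have a: "\<alpha> - frac \<alpha> \<in> \<int>" by (simp add: frac_def)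
  have "cfD \<alpha> 1 = cfD \<alpha> 0 * (cf_rem \<alpha> 1 - cf_a \<alpha> 1)" using frac_Suc[of \<alpha> 1] by (simp add: cfD.simps)
  moreover have "cf_rem \<alpha> 1 * cfD \<alpha> 0 = 1" using rem_mult[OF assms, of 0] by (simp add: cfD.simps)
  ultimately have "cf_a \<alpha> 1 * \<alpha> + cfD \<alpha> 1 = cf_a \<alpha> 1 * (\<alpha> - frac \<alpha>) + 1"
    by (simp add: algebra_simps cfD.simps)
  moreover have "real_of_int (cf_a \<alpha> 1) * (\<alpha> - frac \<alpha>) + 1 \<in> \<int>" using a by simp
  ultimately show ?case using a by (simp add: cfD.simps)
next
  case (Suc n)
  have d: "cfD \<alpha> n = cf_a \<alpha> (n+2) * cfD \<alpha> (n+1) + cfD \<alpha> (n+2)" by (rule D_rec[OF assms])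
  have d2: "cfD \<alpha> (Suc (Suc n)) = cfD \<alpha> n - cf_a \<alpha> (n+2) * cfD \<alpha> (Suc n)" using d by simp
  have s1: "(-1::real)^(Suc (Suc n)) = (-1)^n" by simp
  have s2: "(-1::real)^(Suc n) = - ((-1)^n)" by simp
  have "real_of_int (cf_q \<alpha> (Suc (Suc n))) * \<alpha> - (-1)^(Suc (Suc n)) * cfD \<alpha> (Suc (Suc n))
     = cf_a \<alpha> (n+2) * (real_of_int (cf_q \<alpha> (Suc n)) * \<alpha> - (-1)^(Suc n) * cfD \<alpha> (Suc n))
       + (real_of_int (cf_q \<alpha> n) * \<alpha> - (-1)^n * cfD \<alpha> n)"
    unfolding d2 s1 s2 cf_q.simps(3) by (simp add: algebra_simps)
  also have "\<dots> \<in> \<int>" using Suc by simp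
  finally show ?case using Suc by simp
qed

lemma dist_D: fixes \<alpha> :: real assumes "\<alpha> \<notin> \<rat>" and "cfD \<alpha> n < 1/2"
  shows "dist_nint (real_of_int (cf_q \<alpha> n) * \<alpha>) = cfD \<alpha> n"
proof -
  obtain m where m: "real_of_int (cf_q \<alpha> n) * \<alpha> - (-1)^n * cfD \<alpha> n = of_int m"
    using int_part[OF assms(1), of n] Ints_cases by metis
  have p: "cfD \<alpha> n > 0" by (rule D_pos[OF assms(1)])
  have ab: "\<bar>(-1::real)^n * cfD \<alpha> n\<bar> = cfD \<alpha> n" using p by (simp add: abs_mult)
  have "round (real_of_int (cf_q \<alpha> n) * \<alpha>) = m"
    by (rule round_unique') (use m ab assms(2) in \<open>simp add: algebra_simps\<close>)
  then show ?thesis unfolding dist_nint_def using m ab by (simp add: algebra_simps)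
qed

definition altS :: "real \<Rightarrow> (nat \<Rightarrow> nat) \<Rightarrow> nat \<Rightarrow> nat \<Rightarrow> real" where
  "altS \<alpha> b K m = (\<Sum>l\<in>{m..<K}. (-1)^(l-m) * real (b l) * cfD \<alpha> l)"

lemma altS_split: assumes "\<forall>k\<ge>K. b k = 0"
  shows "altS \<alpha> b K m = real (b m) * cfD \<alpha> m - altS \<alpha> b K (Suc m)"
proof (cases "m < K")
  case True
  have "altS \<alpha> b K m = (-1)^(m-m) * real (b m) * cfD \<alpha> m
      + (\<Sum>l\<in>{Suc m..<K}. (-1)^(l-m) * real (b l) * cfD \<alpha> l)"
    unfolding altS_def using True by (simp add: sum.atLeast_Suc_lessThan)
  also have "(\<Sum>l\<in>{Suc m..<K}. (-1)^(l-m) * real (b l) * cfD \<alpha> l)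
      = (\<Sum>l\<in>{Suc m..<K}. - ((-1)^(l - Suc m) * real (b l) * cfD \<alpha> l))"
  proof (rule sum.cong)
    fix l assume "l \<in> {Suc m..<K}"
    then have "l - m = Suc (l - Suc m)" by auto
    then show "(-1)^(l-m) * real (b l) * cfD \<alpha> l = - ((-1)^(l - Suc m) * real (b l) * cfD \<alpha> l)"
      by simp
  qed simp
  finally show ?thesis unfolding altS_def by (simp add: sum_negf)
next
  case False
  then show ?thesis using assms unfolding altS_def by simp
qed

lemma altS_bounds:
  fixes \<alpha> :: real
  assumes irr: "\<alpha> \<notin> \<rat>" and z: "\<forall>k\<ge>K. b k = 0" and bl: "\<forall>k. int (b k) \<le> cf_a \<alpha> (k + 1)"
  shows "m \<ge> 1 \<Longrightarrow> - cfD \<alpha> m \<le> altS \<alpha> b K m \<and> altS \<alpha> b K m \<le> cfD \<alpha> (m - 1)"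
proof (induction "K - m" arbitrary: m)
  case 0
  then have "altS \<alpha> b K m = 0" unfolding altS_def by simp
  then show ?case using D_pos[OF irr, of m] D_pos[OF irr, of "m-1"] by simp
next
  case (Suc x)
  then have ih: "- cfD \<alpha> (Suc m) \<le> altS \<alpha> b K (Suc m) \<and> altS \<alpha> b K (Suc m) \<le> cfD \<alpha> m" by force
  have sp: "altS \<alpha> b K m = real (b m) * cfD \<alpha> m - altS \<alpha> b K (Suc m)" by (rule altS_split[OF z])
  have rec: "cfD \<alpha> (m-1) = cf_a \<alpha> (m+1) * cfD \<alpha> m + cfD \<alpha> (Suc m)"
    using D_rec[OF irr, of "m-1"] Suc.prems by (simp add: numeral_2_eq_2)
  have "real (b m) \<le> cf_a \<alpha> (m+1)" using bl by (metis of_int_le_iff of_int_of_nat_eq)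
  then have "real (b m) * cfD \<alpha> m \<le> cf_a \<alpha> (m+1) * cfD \<alpha> m"
    using D_pos[OF irr, of m] by (simp add: mult_right_mono)
  moreover have "real (b m) * cfD \<alpha> m \<ge> 0" using D_pos[OF irr, of m] by simp
  ultimately show ?case using sp ih rec by linarith
qed

lemma q_ge2: fixes \<alpha> :: real assumes irr: "\<alpha> \<notin> \<rat>" shows "cf_q \<alpha> (Suc (Suc n)) \<ge> 2"
proof -
  have "cf_q \<alpha> n \<ge> 1" "cf_q \<alpha> (Suc n) \<ge> 1" using q_pos[OF irr] by auto
  moreover have "cf_a \<alpha> (n+2) \<ge> 1" using a_ge1[OF irr, of "Suc n"] by simp
  ultimately have "cf_a \<alpha> (n+2) * cf_q \<alpha> (Suc n) \<ge> 1" by (smt (verit) mult_le_cancel_right1)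
  then show ?thesis using \<open>cf_q \<alpha> n \<ge> 1\<close> by simp
qed

lemma qD_lt1: fixes \<alpha> :: real assumes irr: "\<alpha> \<notin> \<rat>"
  shows "real_of_int (cf_q \<alpha> (Suc n)) * cfD \<alpha> n < 1"
proof -
  have "real_of_int (cf_q \<alpha> n) * cfD \<alpha> (Suc n) > 0"
    using q_pos[OF irr, of n] D_pos[OF irr, of "Suc n"] by simp
  then show ?thesis using q_ident[OF irr, of n] by linarith
qed

lemma D_half: fixes \<alpha> :: real assumes irr: "\<alpha> \<notin> \<rat>" and "n \<ge> 1"
  shows "cfD \<alpha> n < 1/2"
proof -
  obtain m where n: "n = Suc m" using assms(2) by (cases n) auto
  have "real_of_int (cf_q \<alpha> (Suc n)) \<ge> 2" using q_ge2[OF irr, of m] unfolding n by (metis of_int_le_iff of_int_numeral)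
  moreover have "real_of_int (cf_q \<alpha> (Suc n)) * cfD \<alpha> n < 1" by (rule qD_lt1[OF irr])
  moreover have "cfD \<alpha> n > 0" by (rule D_pos[OF irr])
  ultimately have "2 * cfD \<alpha> n \<le> real_of_int (cf_q \<alpha> (Suc n)) * cfD \<alpha> n"
    "real_of_int (cf_q \<alpha> (Suc n)) * cfD \<alpha> n < 1" by (simp_all add: mult_right_mono)
  then show ?thesis by linarith
qed

lemma q_le_succ: fixes \<alpha> :: real assumes irr: "\<alpha> \<notin> \<rat>"
  shows "real_of_int (cf_q \<alpha> (Suc j)) \<le> (real_of_int (cf_a \<alpha> (Suc j)) + 1) * real_of_int (cf_q \<alpha> j)"
proof (cases j)
  case 0 then show ?thesis by simp
next
  case (Suc i)
  have "cf_q \<alpha> i \<le> cf_q \<alpha> (Suc i)" using q_pos[OF irr, of i] by simp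
  then have "real_of_int (cf_q \<alpha> i) \<le> real_of_int (cf_q \<alpha> j)" using Suc by simp
  then show ?thesis using Suc by (simp add: algebra_simps)
qed

theorem lemma1:
  fixes \<alpha> :: real and N :: nat and b :: "nat \<Rightarrow> nat" and K :: nat and k :: nat
  assumes irr: "\<alpha> \<notin> \<rat>"
    and ost: "ostrowski \<alpha> N b K"
    and bk: "b k \<ge> 1"
  shows "(let qk = real_of_int (cf_q \<alpha> k);
              A = - qk * dist_nint (qk * \<alpha>) + qk * dist_nint (real_of_int (cf_q \<alpha> (k + 1)) * \<alpha>);
              B = qk * dist_nint (real_of_int (cf_q \<alpha> (k + 1)) * \<alpha>)
          in -1 < A \<and> A \<le> ost_eps \<alpha> b K k \<and> ost_eps \<alpha> b K k \<le> B \<and> B < 1 / 2)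
    \<and> (\<forall>\<delta>::real. \<delta> > 0 \<longrightarrow> real (b (k + 1)) \<le> (1 - \<delta>) * real_of_int (cf_a \<alpha> (k + 2)) \<longrightarrow>
          ost_eps \<alpha> b K k \<ge> - (1 - \<delta> / 3) * real_of_int (cf_q \<alpha> k) * dist_nint (real_of_int (cf_q \<alpha> k) * \<alpha>))
    \<and> (\<forall>(k0::nat) (T::real). k0 \<ge> 1 \<longrightarrow> T \<ge> 1 \<longrightarrow>
          (\<forall>j\<ge>k0. ln (real_of_int (cf_a \<alpha> j)) / real_of_int (cf_a \<alpha> (j + 1)) \<le> T) \<longrightarrow>
          k \<ge> k0 \<longrightarrow> ost_eps \<alpha> b K k \<ge> - (1 - 1 / (exp T + 2)))"
proof -
  from ost have z: "\<forall>k\<ge>K. b k = 0" and b0: "int (b 0) < cf_a \<alpha> 1"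
    and bl: "\<forall>k. int (b k) \<le> cf_a \<alpha> (k+1)"
    and bc: "\<forall>k. int (b (Suc k)) = cf_a \<alpha> (k + 2) \<longrightarrow> b k = 0"
    unfolding ostrowski_def by auto
  define q where "q = real_of_int (cf_q \<alpha> k)"
  define q1 where "q1 = real_of_int (cf_q \<alpha> (k+1))"
  define q2 where "q2 = real_of_int (cf_q \<alpha> (k+2))"
  define D0 where "D0 = cfD \<alpha> k"
  define D1 where "D1 = cfD \<alpha> (k+1)"
  define D2 where "D2 = cfD \<alpha> (k+2)"
  define a2 where "a2 = real_of_int (cf_a \<alpha> (k+2))"
  define S where "S = altS \<alpha> b K (k+1)"
  have D0p: "D0 > 0" "D1 > 0" "D2 > 0" unfolding D0_def D1_def D2_def using D_pos[OF irr] by auto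
  have D21: "D2 < D1" unfolding D1_def D2_def using D_dec[OF irr, of "k+1"] by simp
  have qp: "q \<ge> 1" "q \<le> q1" unfolding q_def q1_def using q_pos[OF irr, of k] by auto
  have a2p: "a2 \<ge> 1" unfolding a2_def using a_ge1[OF irr, of "k+1"] by simp
  have q2e: "q2 = a2 * q1 + q" unfolding q2_def a2_def q1_def q_def by (simp add: numeral_2_eq_2)
  have q1D0: "q1 * D0 < 1" unfolding q1_def D0_def using qD_lt1[OF irr, of k] by simp
  have q2D1: "q2 * D1 < 1" unfolding q2_def D1_def using qD_lt1[OF irr, of "k+1"] by simp
  have rec: "D0 = a2 * D1 + D2" unfolding D0_def D1_def D2_def a2_def by (rule D_rec[OF irr])
  have Dk: "dist_nint (q * \<alpha>) = D0"
  proof (cases k)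
    case 0
    then have "cf_a \<alpha> 1 \<ge> 2" using b0 bk by simp
    then have "q1 \<ge> 2" unfolding q1_def using 0 by simp
    then have "2 * D0 \<le> q1 * D0" using D0p by (simp add: mult_right_mono)
    then have "cfD \<alpha> k < 1/2" using q1D0 unfolding D0_def by linarith
    then show ?thesis unfolding q_def D0_def by (rule dist_D[OF irr])
  next
    case (Suc j)
    then show ?thesis unfolding q_def D0_def by (intro dist_D[OF irr] D_half[OF irr]) simp
  qed
  have Dk1: "dist_nint (q1 * \<alpha>) = D1"
    unfolding q1_def D1_def by (intro dist_D[OF irr] D_half[OF irr]) simp
  have eps: "ost_eps \<alpha> b K k = - q * S"
  proof -
    have "(\<Sum>l\<in>{k+1..<K}. (-1) ^ (k + l) * real (b l) * dist_nint (real_of_int (cf_q \<alpha> l) * \<alpha>))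
       = (\<Sum>l\<in>{k+1..<K}. - ((-1)^(l-(k+1)) * real (b l) * cfD \<alpha> l))"
    proof (rule sum.cong)
      fix l assume l: "l \<in> {k+1..<K}"
      then have dl: "dist_nint (real_of_int (cf_q \<alpha> l) * \<alpha>) = cfD \<alpha> l"
        by (intro dist_D[OF irr] D_half[OF irr]) auto
      have "k + l = (l - (k+1)) + Suc (2*k)" using l by auto
      then have "(-1::real) ^ (k + l) = (-1)^(l-(k+1)) * (-1)^(Suc (2*k))" by (metis power_add)
      moreover have "(-1::real)^(Suc (2*k)) = -1" by (simp add: power_mult)
      ultimately have "(-1::real) ^ (k + l) = - ((-1)^(l-(k+1)))" by simp
      with dl show "(-1) ^ (k + l) * real (b l) * dist_nint (real_of_int (cf_q \<alpha> l) * \<alpha>)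
          = - ((-1)^(l-(k+1)) * real (b l) * cfD \<alpha> l)" by simp
    qed simp
    then show ?thesis unfolding ost_eps_def S_def altS_def q_def by (simp add: sum_negf)
  qed
  have S1: "- D1 \<le> S" "S \<le> D0" using altS_bounds[OF irr z bl, of "k+1"] unfolding S_def D1_def D0_def by auto
  have S2: "- D2 \<le> altS \<alpha> b K (k+2)" using altS_bounds[OF irr z bl, of "k+2"] unfolding D2_def by auto
  have sp: "S = real (b (k+1)) * D1 - altS \<alpha> b K (k+2)"
    unfolding S_def D1_def using altS_split[OF z, of \<alpha> "k+1"] by simp
  have bk1: "real (b (k+1)) \<le> a2 - 1"
  proof -
    have "int (b (k+1)) \<le> cf_a \<alpha> (k+2)" using bl[rule_format, of "k+1"] by (simp add: numeral_2_eq_2)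
    moreover have "int (b (k+1)) \<noteq> cf_a \<alpha> (k+2)" using bc[rule_format, of k] bk by auto
    ultimately have "int (b (k+1)) \<le> cf_a \<alpha> (k+2) - 1" by simp
    then show ?thesis unfolding a2_def by (metis of_int_diff of_int_le_iff of_int_of_nat_eq of_int_1)
  qed
  have Sle: "S \<le> D0 - D1"
  proof -
    have "real (b (k+1)) * D1 \<le> (a2 - 1) * D1" using bk1 D0p by (simp add: mult_right_mono)
    then show ?thesis using sp S2 rec by (simp add: algebra_simps)
  qed
  have qD0: "q * D0 < 1"
  proof -
    have "q * D0 \<le> q1 * D0" using qp D0p by (simp add: mult_right_mono)
    then show ?thesis using q1D0 by linarith
  qed
  have qD1: "q * D1 < 1/2"
  proof -
    have "q2 \<ge> 2 * q" using q2e qp a2p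
      by (smt (verit, best) mult_le_cancel_right1)
    then have "2 * q * D1 \<le> q2 * D1" using D0p by (simp add: mult_right_mono)
    then show ?thesis using q2D1 by linarith
  qed
  have A1: "-q * D0 + q * D1 \<le> - q * S"
  proof -
    have "q * S \<le> q * (D0 - D1)" using Sle qp by (simp add: mult_left_mono)
    then show ?thesis by (simp add: algebra_simps)
  qed
  have B1: "- q * S \<le> q * D1"
  proof -
    have "q * (- D1) \<le> q * S" using S1 qp by (intro mult_left_mono) auto
    then show ?thesis by (simp add: algebra_simps)
  qed
  have qD1p: "q * D1 > 0" using qp D0p by simp
  have part1: "(let qk = real_of_int (cf_q \<alpha> k);
              A = - qk * dist_nint (qk * \<alpha>) + qk * dist_nint (real_of_int (cf_q \<alpha> (k + 1)) * \<alpha>);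
              B = qk * dist_nint (real_of_int (cf_q \<alpha> (k + 1)) * \<alpha>)
          in -1 < A \<and> A \<le> ost_eps \<alpha> b K k \<and> ost_eps \<alpha> b K k \<le> B \<and> B < 1 / 2)"
    unfolding Let_def q_def[symmetric] q1_def[symmetric] Dk Dk1 eps
    using qD0 qD1p A1 B1 qD1 by linarith
  have part2: "\<forall>\<delta>::real. \<delta> > 0 \<longrightarrow> real (b (k + 1)) \<le> (1 - \<delta>) * real_of_int (cf_a \<alpha> (k + 2)) \<longrightarrow>
          ost_eps \<alpha> b K k \<ge> - (1 - \<delta> / 3) * real_of_int (cf_q \<alpha> k) * dist_nint (real_of_int (cf_q \<alpha> k) * \<alpha>)"
  proof (intro allI impI)
    fix \<delta> :: real assume dp: "\<delta> > 0" and hb: "real (b (k + 1)) \<le> (1 - \<delta>) * real_of_int (cf_a \<alpha> (k + 2))"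
    have "real (b (k+1)) * D1 \<le> (1 - \<delta>) * a2 * D1" using hb D0p unfolding a2_def by (simp add: mult_right_mono)
    then have s: "S \<le> D0 - \<delta> * (a2 * D1)" using sp S2 rec by (simp add: algebra_simps)
    have "D0 \<le> 3 * (a2 * D1)"
    proof -
      have "D1 \<le> a2 * D1" using a2p D0p by simp
      then show ?thesis using rec D21 D0p by linarith
    qed
    then have "\<delta> * (D0 / 3) \<le> \<delta> * (a2 * D1)" using dp by (simp add: mult_left_mono)
    then have "S \<le> (1 - \<delta>/3) * D0" using s by (simp add: algebra_simps)
    then have "q * S \<le> q * ((1 - \<delta>/3) * D0)" using qp by (simp add: mult_left_mono)
    then show "ost_eps \<alpha> b K k \<ge> - (1 - \<delta> / 3) * real_of_int (cf_q \<alpha> k) * dist_nint (real_of_int (cf_q \<alpha> k) * \<alpha>)"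
      unfolding q_def[symmetric] Dk eps by (simp add: algebra_simps)
  qed
  have part3: "\<forall>(k0::nat) (T::real). k0 \<ge> 1 \<longrightarrow> T \<ge> 1 \<longrightarrow>
          (\<forall>j\<ge>k0. ln (real_of_int (cf_a \<alpha> j)) / real_of_int (cf_a \<alpha> (j + 1)) \<le> T) \<longrightarrow>
          k \<ge> k0 \<longrightarrow> ost_eps \<alpha> b K k \<ge> - (1 - 1 / (exp T + 2))"
  proof (intro allI impI)
    fix k0 :: nat and T :: real
    assume k01: "k0 \<ge> 1" and T1: "T \<ge> 1"
      and hT: "\<forall>j\<ge>k0. ln (real_of_int (cf_a \<alpha> j)) / real_of_int (cf_a \<alpha> (j + 1)) \<le> T"
      and kk: "k \<ge> k0"
    obtain j where kj: "k = Suc j" using kk k01 by (cases k) auto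
    define c where "c = exp T"
    have cp: "c > 0" unfolding c_def by simp
    define a1 where "a1 = real_of_int (cf_a \<alpha> (k+1))"
    define ak where "ak = real_of_int (cf_a \<alpha> k)"
    define qm where "qm = real_of_int (cf_q \<alpha> j)"
    define Dm where "Dm = cfD \<alpha> j"
    have a1p: "a1 \<ge> 1" unfolding a1_def using a_ge1[OF irr, of k] by simp
    have akp: "ak \<ge> 1" unfolding ak_def kj using a_ge1[OF irr, of j] by simp
    have id: "q * Dm + qm * D0 = 1" unfolding q_def Dm_def qm_def D0_def kj using q_ident[OF irr, of j] by simp
    have recm: "Dm = a1 * D0 + D1" unfolding Dm_def a1_def D0_def D1_def kj using D_rec[OF irr, of j] by simp
    have "q * Dm > q * (a1 * D0)" using recm D0p qp by simp
    then have key: "a1 * (q * D0) + qm * D0 < 1" using id by (simp add: algebra_simps)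
    have qmD0: "qm * D0 > 0" unfolding qm_def using q_pos[OF irr, of j] D0p by simp
    have qD0p: "q * D0 > 0" using qp D0p by simp
    have goal: "q * D0 < 1 - 1 / (c + 2)"
    proof (cases "a1 \<ge> 2")
      case True
      then have "2 * (q * D0) \<le> a1 * (q * D0)" using qD0p by (simp add: mult_right_mono)
      then have "q * D0 < 1/2" using key qmD0 by linarith
      moreover have "1 / (c+2) \<le> 1/2" using cp by (simp add: divide_simps)
      ultimately show ?thesis by linarith
    next
      case False
      have i1: "cf_a \<alpha> (k+1) \<ge> 1" using a_ge1[OF irr, of k] by simp
      have i2: "\<not> cf_a \<alpha> (k+1) \<ge> 2" using False unfolding a1_def by simp
      have "cf_a \<alpha> (k+1) = 1" using i1 i2 by simp
      then have a11: "a1 = 1" unfolding a1_def by simp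
      have "ln ak / a1 \<le> T" using hT kk unfolding ak_def a1_def by simp
      then have "ln ak \<le> T" using a11 by simp
      then have akc: "ak \<le> c" unfolding c_def using akp by (metis exp_le_cancel_iff exp_ln less_le_trans zero_less_one)
      have "q \<le> (ak + 1) * qm" unfolding q_def ak_def qm_def kj by (rule q_le_succ[OF irr])
      then have "q * D0 \<le> (ak + 1) * qm * D0" using D0p by (simp add: mult_right_mono)
      also have "\<dots> = (ak + 1) * (qm * D0)" by (simp add: mult.assoc)
      also have "\<dots> \<le> (c + 1) * (qm * D0)" using akc qmD0 by (intro mult_right_mono) auto
      finally have x: "q * D0 \<le> (c + 1) * (qm * D0)" .
      have "q * D0 + qm * D0 < 1" using key a11 by simp
      then have "(c+1) * (q * D0 + qm * D0) < c + 1" using cp by simp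
      then have "(q * D0) * (c + 2) < c + 1" using x by (simp add: algebra_simps)
      then have "q * D0 < (c + 1) / (c + 2)" using cp by (simp add: divide_simps)
      moreover have "(c + 1) / (c + 2) = 1 - 1 / (c + 2)" using cp by (simp add: divide_simps)
      ultimately show ?thesis by simp
    qed
    have "- q * D0 \<le> ost_eps \<alpha> b K k" using A1 qD1p eps by linarith
    then show "ost_eps \<alpha> b K k \<ge> - (1 - 1 / (exp T + 2))" using goal unfolding c_def by linarith
  qed
  show ?thesis using part1 part2 part3 by blast
qed

end
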